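(* Let $\phi=\phi_{\mathrm{NH}}$, $\phi_{\mathrm{NH}}(y,t)=t^{-1/2}\exp(y^2/(2t))$, and $\Phi(\boldsymbol x,t)=\sum_{i=1}^N\phi(x_i,t)$. Then for all $\boldsymbol x\in\mathbb{R}^N$ and $t>0$, $$\mathrm{DErr}_\Phi(\boldsymbol x,t)\le\frac{\max_i x_i^2/t+4}{4t}.$$
   Context: $\mathrm{DErr}_\Phi(\boldsymbol x,t):=\dfrac{\sum_{i=1}^N\frac{\partial^4}{\partial x^4}\phi(x_i,t)}{4\sum_{i=1}^N\partial_{xx}\phi(x_i,t)}-\dfrac{1}{4\Phi(\boldsymbol x,t)}\sum_{i=1}^N\partial_{xx}\phi(x_i,t)$, where derivatives are in the first argument of $\phi$. *)

theory Defs
  imports "HOL-Analysis.Analysis"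
begin

definition phiNH :: "real \<Rightarrow> real \<Rightarrow> real" where
  "phiNH y t = t powr (-1/2) * exp (y^2 / (2*t))"

definition dx :: "nat \<Rightarrow> (real \<Rightarrow> real \<Rightarrow> real) \<Rightarrow> real \<Rightarrow> real \<Rightarrow> real" where
  "dx k phi y t = (deriv ^^ k) (\<lambda>z. phi z t) y"

definition PhiSum :: "(real \<Rightarrow> real \<Rightarrow> real) \<Rightarrow> real ^ 'n \<Rightarrow> real \<Rightarrow> real" where
  "PhiSum phi x t = (\<Sum>i\<in>UNIV. phi (x $ i) t)"

definition DErr :: "(real \<Rightarrow> real \<Rightarrow> real) \<Rightarrow> real ^ 'n \<Rightarrow> real \<Rightarrow> real" where
  "DErr phi x t =
     (\<Sum>i\<in>UNIV. dx 4 phi (x $ i) t) / (4 * (\<Sum>i\<in>UNIV. dx 2 phi (x $ i) t))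
     - (1 / (4 * PhiSum phi x t)) * (\<Sum>i\<in>UNIV. dx 2 phi (x $ i) t)"

end

theory Submission
  imports Defs
begin

lemma D1: fixes t :: real assumes "t > 0" shows "deriv (\<lambda>z. phiNH z t) = (\<lambda>z. t powr (-1/2) * (z/t) * exp (z^2/(2*t)))"
proof
  fix z show "deriv (\<lambda>z. phiNH z t) z = t powr (-1/2) * (z/t) * exp (z^2/(2*t))"
    unfolding phiNH_def
    by (rule DERIV_imp_deriv) (use assms in \<open>auto intro!: derivative_eq_intros simp: field_simps power2_eq_square\<close>)
qed

lemma D2: fixes t :: real assumes "t > 0" shows "deriv (\<lambda>z. t powr (-1/2) * (z/t) * exp (z^2/(2*t))) = (\<lambda>z. t powr (-1/2) * (1/t + z^2/t^2) * exp (z^2/(2*t)))"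
proof
  fix z show "deriv (\<lambda>z. t powr (-1/2) * (z/t) * exp (z^2/(2*t))) z = t powr (-1/2) * (1/t + z^2/t^2) * exp (z^2/(2*t))"
    by (rule DERIV_imp_deriv) (use assms in \<open>auto intro!: derivative_eq_intros simp: field_simps power2_eq_square\<close>)
qed

lemma D3: fixes t :: real assumes "t > 0" shows "deriv (\<lambda>z. t powr (-1/2) * (1/t + z^2/t^2) * exp (z^2/(2*t))) = (\<lambda>z. t powr (-1/2) * (3*z/t^2 + z^3/t^3) * exp (z^2/(2*t)))"
proof
  fix z show "deriv (\<lambda>z. t powr (-1/2) * (1/t + z^2/t^2) * exp (z^2/(2*t))) z = t powr (-1/2) * (3*z/t^2 + z^3/t^3) * exp (z^2/(2*t))"
    by (rule DERIV_imp_deriv) (use assms in \<open>auto intro!: derivative_eq_intros simp: field_simps power2_eq_square power3_eq_cube\<close>)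
qed

lemma D4: fixes t :: real assumes "t > 0" shows "deriv (\<lambda>z. t powr (-1/2) * (3*z/t^2 + z^3/t^3) * exp (z^2/(2*t))) = (\<lambda>z. t powr (-1/2) * (3/t^2 + 6*z^2/t^3 + z^4/t^4) * exp (z^2/(2*t)))"
proof
  fix z show "deriv (\<lambda>z. t powr (-1/2) * (3*z/t^2 + z^3/t^3) * exp (z^2/(2*t))) z = t powr (-1/2) * (3/t^2 + 6*z^2/t^3 + z^4/t^4) * exp (z^2/(2*t))"
    by (rule DERIV_imp_deriv) (use assms in \<open>auto intro!: derivative_eq_intros simp: field_simps power2_eq_square power3_eq_cube power4_eq_xxxx\<close>)
qed

lemma DX2: fixes t :: real assumes "t > 0" shows "dx 2 phiNH y t = (1 + y^2/t) * (t powr (-1/2) * exp (y^2/(2*t))) / t"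
proof -
  have "dx 2 phiNH y t = deriv (deriv (\<lambda>z. phiNH z t)) y" by (simp add: dx_def numeral_eq_Suc)
  also have "\<dots> = t powr (-1/2) * (1/t + y^2/t^2) * exp (y^2/(2*t))" by (simp only: D1[OF assms] D2[OF assms])
  also have "\<dots> = (1 + y^2/t) * (t powr (-1/2) * exp (y^2/(2*t))) / t" using assms by (simp add: field_simps power2_eq_square)
  finally show ?thesis .
qed

lemma DX4: fixes t :: real assumes "t > 0" shows "dx 4 phiNH y t = (3 + 6*(y^2/t) + (y^2/t)^2) * (t powr (-1/2) * exp (y^2/(2*t))) / t^2"
proof -
  have "dx 4 phiNH y t = deriv (deriv (deriv (deriv (\<lambda>z. phiNH z t)))) y" by (simp add: dx_def numeral_eq_Suc)
  also have "\<dots> = t powr (-1/2) * (3/t^2 + 6*y^2/t^3 + y^4/t^4) * exp (y^2/(2*t))" by (simp only: D1[OF assms] D2[OF assms] D3[OF assms] D4[OF assms])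
  also have "\<dots> = (3 + 6*(y^2/t) + (y^2/t)^2) * (t powr (-1/2) * exp (y^2/(2*t))) / t^2" using assms by (simp add: field_simps power2_eq_square power3_eq_cube power4_eq_xxxx)
  finally show ?thesis .
qed

lemma main_ineq:
  fixes e u :: "'n::finite \<Rightarrow> real" and M :: real
  assumes e: "\<And>i. e i > 0" and u: "\<And>i. 0 \<le> u i" "\<And>i. u i \<le> M"
  shows "(\<Sum>i\<in>UNIV. (3 + 6*u i + (u i)^2) * e i) / (\<Sum>i\<in>UNIV. (1 + u i) * e i)
         - (\<Sum>i\<in>UNIV. (1 + u i) * e i) / (\<Sum>i\<in>UNIV. e i) \<le> M + 4"
proof -
  let ?S0 = "\<Sum>i\<in>UNIV. e i" and ?S2 = "\<Sum>i\<in>UNIV. (1 + u i) * e i"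
  have S0: "?S0 > 0" using e by (simp add: sum_pos)
  have S2ge: "?S2 \<ge> ?S0" using e u by (intro sum_mono) (simp add: mult_nonneg_nonneg)
  have S2: "?S2 > 0" using S0 S2ge by linarith
  have A: "(\<Sum>i\<in>UNIV. (3 + 6*u i + (u i)^2) * e i) \<le> (M + 5) * ?S2"
    unfolding sum_distrib_left
  proof (rule sum_mono)
    fix i
    have "(3 + 6*u i + (u i)^2) \<le> (M + 5) * (1 + u i)"
    proof -
      have "0 \<le> (M - u i) * (1 + u i)" using u[of i] by simp
      then show ?thesis by (simp add: algebra_simps power2_eq_square)
    qed
    then show "(3 + 6*u i + (u i)^2) * e i \<le> (M + 5) * ((1 + u i) * e i)"
      using e[of i] by (metis mult.assoc mult_right_mono less_imp_le)
  qed
  have "(\<Sum>i\<in>UNIV. (3 + 6*u i + (u i)^2) * e i) / ?S2 \<le> M + 5"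
    using A S2 by (simp add: divide_le_eq)
  moreover have "?S2 / ?S0 \<ge> 1" using S0 S2ge by simp
  ultimately show ?thesis by linarith
qed

theorem lemma6p6:
  fixes x :: "real ^ 'n" and t :: real
  assumes "t > 0"
  shows "DErr phiNH x t \<le> ((MAX i\<in>UNIV. (x $ i)^2) / t + 4) / (4 * t)"
proof -
  define e where "e i = t powr (-1/2) * exp ((x $ i)^2/(2*t))" for i
  define u where "u i = (x $ i)^2 / t" for i
  define M where "M = (MAX i\<in>UNIV. (x $ i)^2) / t"
  have e: "\<And>i. e i > 0" unfolding e_def using assms by simp
  have u0: "\<And>i. 0 \<le> u i" unfolding u_def using assms by simp
  have uM: "\<And>i. u i \<le> M" unfolding u_def M_def using assms
    by (intro divide_right_mono) (auto intro: Max_ge)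
  let ?S0 = "\<Sum>i\<in>UNIV. e i" and ?S2 = "\<Sum>i\<in>UNIV. (1 + u i) * e i"
    and ?S4 = "\<Sum>i\<in>UNIV. (3 + 6*u i + (u i)^2) * e i"
  have h4: "(\<Sum>i\<in>UNIV. dx 4 phiNH (x $ i) t) = ?S4 / t^2"
    unfolding DX4[OF assms] e_def u_def by (simp add: sum_divide_distrib)
  have h2: "(\<Sum>i\<in>UNIV. dx 2 phiNH (x $ i) t) = ?S2 / t"
    unfolding DX2[OF assms] e_def u_def by (simp add: sum_divide_distrib)
  have h0: "PhiSum phiNH x t = ?S0"
    unfolding PhiSum_def phiNH_def e_def ..
  have S0: "?S0 > 0" using e by (simp add: sum_pos)
  have S2ge: "?S2 \<ge> ?S0" using e u0 by (intro sum_mono) (simp add: mult_nonneg_nonneg)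
  have S2: "?S2 > 0" using S0 S2ge by linarith
  have "DErr phiNH x t = (?S4 / ?S2 - ?S2 / ?S0) / (4 * t)"
    unfolding DErr_def h4 h2 h0 using assms S0 S2 by (simp add: field_simps power2_eq_square)
  also have "\<dots> \<le> (M + 4) / (4 * t)"
    using main_ineq[OF e u0 uM] assms by (intro divide_right_mono) auto
  also have "\<dots> = ((MAX i\<in>UNIV. (x $ i)^2) / t + 4) / (4 * t)" unfolding M_def ..
  finally show ?thesis .
qed

end
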